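(* Let $q\in(0,\tfrac12)$ and let $T\sim U(0,1)$, $S\sim U(-1,0)$ be independent. Let $p_3^{SH}$ be the probability that $$P_{T,S}(x)=(T+S-1)x^3+\big(1-T-2S+q(S-1-T)\big)x^2+\big(S+q(T-S)\big)x$$ has exactly three distinct roots in $[0,1]$. Then $$p_3^{SH}=\frac{1}{1-2q}\,\mathrm{Area}(D\cap D_1),$$ where $D=\{(x,y)\in\mathbb{R}^2:\ -1<x<0,\ -\frac{x^2}{4q}-q<y<-q\}$ and $D_1$ is the open quadrilateral with consecutive vertices $A=(-1,-1)$, $B=(-(1-q),-q)$, $O=(0,0)$, $C=(-q,-(1-q))$ (equivalently, $D_1$ is the image of $(-1,0)^2$ under the linear map $(t,s)\mapsto((1-q)t+qs,\ qt+(1-q)s)$).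
   Context: "Area" denotes two-dimensional Lebesgue measure. *)

theory Defs
  imports "HOL-Probability.Probability"
begin

definition P_TS :: "real \<Rightarrow> real \<Rightarrow> real \<Rightarrow> real \<Rightarrow> real" where
  "P_TS q t s x = (t + s - 1) * x ^ 3 + (1 - t - 2 * s + q * (s - 1 - t)) * x ^ 2
                  + (s + q * (t - s)) * x"

definition region_D :: "real \<Rightarrow> (real \<times> real) set" where
  "region_D q = {(x, y). -1 < x \<and> x < 0 \<and> - (x ^ 2) / (4 * q) - q < y \<and> y < - q}"

definition region_D1 :: "real \<Rightarrow> (real \<times> real) set" where
  "region_D1 q = interior (convex hull {(-1, -1), (-(1 - q), -q), (0, 0), (-q, -(1 - q))})"

end

theory Submission
  imports Defs
begin


lemma card3_iff:
  fixes a b c q :: real assumes q: "0<q" and abc: "a+b+c = -q"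
  shows "card {x\<in>{0..1}. x*(a*x^2+b*x+c) = 0} = 3 \<longleftrightarrow>
         (a<0 \<and> c<0 \<and> b^2-4*a*c>0 \<and> 0 < -b/(2*a) \<and> -b/(2*a) < 1)" (is "card ?R = 3 \<longleftrightarrow> ?C")
proof
  assume "card ?R = 3"
  then obtain u v w where uvw: "?R = {u,v,w}" "u\<noteq>v" "v\<noteq>w" "u\<noteq>w" by (auto simp: card_3_iff)
  have "\<exists>x1 x2. x1 \<in> ?R \<and> x2 \<in> ?R \<and> x1 \<noteq> 0 \<and> x2 \<noteq> 0 \<and> x1 \<noteq> x2"
  proof (cases "u = 0")
    case True thus ?thesis using uvw by (metis insertCI)
  next
    case False
    show ?thesis
    proof (cases "v = 0")
      case True thus ?thesis using uvw False by (metis insertCI)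
    next
      case False2: False
      thus ?thesis using uvw False by (metis insertCI)
    qed
  qed
  then obtain x1 x2 where x: "x1 \<in> ?R" "x2 \<in> ?R" "x1 \<noteq> 0" "x2 \<noteq> 0" "x1 \<noteq> x2" by blast
  have q1: "a*x1^2+b*x1+c = 0" and q2: "a*x2^2+b*x2+c = 0" using x by auto
  have r1: "0 < x1" "x1 \<le> 1" and r2: "0 < x2" "x2 \<le> 1" using x by auto
  have "x1 \<noteq> 1" using q1 abc q by auto
  hence r1': "x1 < 1" using r1 by auto
  have "x2 \<noteq> 1" using q2 abc q by auto
  hence r2': "x2 < 1" using r2 by auto
  have "(a*(x1+x2)+b)*(x1-x2) = 0" using q1 q2 by (simp add: algebra_simps power2_eq_square)
  hence sum: "a*(x1+x2) + b = 0" using x by simp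
  have b: "b = -(a*(x1+x2))" using sum by linarith
  have prod: "a*x1*x2 = c" using q1 unfolding b by (simp add: algebra_simps power2_eq_square)
  have "a \<noteq> 0" proof assume "a = 0" hence "b = 0" using sum by simp
    hence "c = 0" using \<open>a=0\<close> prod by simp
    thus False using abc q \<open>a=0\<close> \<open>b=0\<close> by simp qed
  have e1: "a*(1-x1)*(1-x2) = -q" using sum prod abc by (simp add: algebra_simps)
  have "(1-x1)*(1-x2) > 0" using r1' r2' by simp
  hence an: "a < 0"
  proof (rule contrapos_pp)
    assume "\<not> a < 0" hence "a*((1-x1)*(1-x2)) \<ge> 0" using \<open>(1-x1)*(1-x2) > 0\<close> by simp
    thus "\<not> (1-x1)*(1-x2) > 0" using e1 q by (simp add: mult.assoc)
  qed
  have "a*x1 < 0" using an r1 by (simp add: mult_neg_pos)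
  hence cn: "c < 0" using prod r2 by (metis mult_neg_pos)
  have "b^2-4*a*c = a^2*(x1-x2)^2" unfolding b prod[symmetric] by (simp add: power2_eq_square algebra_simps)
  moreover have "a^2*(x1-x2)^2 > 0" using \<open>a\<noteq>0\<close> x by simp
  moreover have "-b/(2*a) = (x1+x2)/2" using sum \<open>a\<noteq>0\<close> by (simp add: field_simps)
  ultimately show ?C using an cn r1 r2 r1' r2' by auto
next
  assume C: ?C
  hence an: "a < 0" and cn: "c<0" and dp: "b^2-4*a*c > 0" by auto
  define d where "d = b^2-4*a*c"
  define m where "m = -b/(2*a)"
  define e where "e = sqrt d / (-2*a)"
  have m: "0 < m" "m < 1" using C m_def by auto
  have sd: "sqrt d > 0" using dp by (simp add: d_def)
  have "-2*a > 0" using an by simp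
  hence ep: "e > 0" unfolding e_def using sd by (rule divide_pos_pos[rotated])
  have e2: "4*a^2*e^2 = d" using dp an by (simp add: e_def power_divide d_def power2_eq_square)
  have m2: "2*a*m = -b" using an by (simp add: m_def)
  have "4*a^2*m^2 = (2*a*m)^2" by (simp add: power_mult_distrib)
  hence "4*a^2*m^2 = b^2" using m2 by simp
  hence k: "4*a^2*(m^2-e^2) = 4*a*c" using e2 by (simp add: d_def algebra_simps)
  have "(4*a)*(a*(m^2-e^2)) = (4*a)*c" using k by (simp add: power2_eq_square mult.assoc)
  hence "a*(m^2-e^2) = c" using an by simp
  hence "m^2 - e^2 = c/a" using an by (simp add: eq_divide_eq mult.commute)
  hence "m^2 - e^2 > 0" using an cn by (simp add: divide_neg_neg)
  hence em: "e < m"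
  proof (rule contrapos_pp)
    assume "\<not> e < m" hence "m^2 \<le> e^2" using m by (intro power_mono) auto
    thus "\<not> m^2 - e^2 > 0" by simp
  qed
  have cc: "c = -q - a + 2*a*m" using m2 abc by linarith
  have "4*a^2*((1-m)^2 - e^2) = 4*a^2*(m^2-e^2) + 4*a^2*(1-2*m)" by (simp add: algebra_simps power2_eq_square)
  also have "\<dots> = 4*a*(-q)" unfolding k cc by (simp add: algebra_simps power2_eq_square)
  finally have "4*a^2*((1-m)^2 - e^2) = 4*a*(-q)" .
  hence "(4*a)*(a*((1-m)^2 - e^2)) = (4*a)*(-q)" by (simp add: power2_eq_square mult.assoc)
  hence "a*((1-m)^2 - e^2) = -q" using an by (metis mult_cancel_left mult_eq_0_iff zero_neq_numeral less_irrefl)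
  hence "(1-m)^2 - e^2 > 0" using an q mult_nonpos_nonpos[of a "(1-m)^2 - e^2"] by linarith
  hence em2: "e < 1 - m"
  proof (rule contrapos_pp)
    assume "\<not> e < 1 - m" hence "(1-m)^2 \<le> e^2" using m by (intro power_mono) auto
    thus "\<not> (1-m)^2 - e^2 > 0" by simp
  qed
  define r1 where "r1 = m - e"
  define r2 where "r2 = m + e"
  have s12: "a*(r1+r2) = -b" using an by (simp add: r1_def r2_def m_def)
  have p12: "a*(r1*r2) = c" using \<open>m^2 - e^2 = c/a\<close> an
    by (simp add: r1_def r2_def power2_eq_square algebra_simps field_simps)
  have fac: "a*x^2+b*x+c = a*(x-r1)*(x-r2)" for x
  proof -
    have "a*(x-r1)*(x-r2) = a*x^2 - a*(r1+r2)*x + a*(r1*r2)" by (simp add: algebra_simps power2_eq_square)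
    thus ?thesis using s12 p12 by simp
  qed
  have roots: "a*x^2+b*x+c = 0 \<longleftrightarrow> x = r1 \<or> x = r2" for x
    using an by (simp add: fac)
  have "?R = {0, r1, r2}" using roots ep em em2 m by (auto simp: r1_def r2_def)
  moreover have "card {0, r1, r2} = 3" using ep em em2 m by (auto simp: r1_def r2_def)
  ultimately show "card ?R = 3" by simp
qed


lemma box_char:
  fixes q t s :: real
  assumes q: "0<q" "q<1/2" and t: "0<t" "t<1" and s: "-1<s" "s<0"
  defines "a \<equiv> t + s - 1" and "b \<equiv> 1 - t - 2 * s + q * (s - 1 - t)" and "c \<equiv> s + q * (t - s)"
  shows "(a<0 \<and> c<0 \<and> b^2-4*a*c>0 \<and> 0 < -b/(2*a) \<and> -b/(2*a) < 1) \<longleftrightarrow>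
         ((1-q)*(t-1)+q* s, q*(t-1)+(1-q)* s) \<in> region_D q"
proof -
  define x where "x = (1-q)*(t-1)+q* s"
  define y where "y = q*(t-1)+(1-q)* s"
  have ax: "a = x+y" by (simp add: a_def x_def y_def algebra_simps)
  have cx: "c = y+q" by (simp add: c_def y_def algebra_simps)
  have bx: "b = -x-2*y-2*q" by (simp add: b_def x_def y_def algebra_simps)
  have dx: "b^2-4*a*c = x^2 + 4*q*(y+q)" unfolding ax bx cx by (simp add: algebra_simps power2_eq_square)
  have "(1-q)*(t-1) < 0" using q t by (intro mult_pos_neg) auto
  moreover have "q * s < 0" using q s by (intro mult_pos_neg) auto
  ultimately have x0: "x < 0" unfolding x_def by linarith
  have x1: "-1 < x"
  proof -
    have h1: "(1-q)*(t-1) > -(1-q)" using mult_strict_left_mono[of "-1" "t-1" "1-q"] q t by simp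
    have h2: "q * s > -q" using mult_strict_left_mono[of "-1" s q] q s by simp
    show ?thesis unfolding x_def using h1 h2 by linarith
  qed
  have Deq: "((1-q)*(t-1)+q* s, q*(t-1)+(1-q)* s) \<in> region_D q \<longleftrightarrow> - (x^2)/(4*q) - q < y \<and> y < -q"
    using x0 x1 by (simp add: region_D_def x_def[symmetric] y_def[symmetric])
  have dd: "x^2 + 4*q*(y+q) > 0 \<longleftrightarrow> - (x^2)/(4*q) - q < y" using q
    by (simp add: field_simps) linarith
  show ?thesis
  proof
    assume H: "a<0 \<and> c<0 \<and> b^2-4*a*c>0 \<and> 0 < -b/(2*a) \<and> -b/(2*a) < 1"
    thus "((1-q)*(t-1)+q* s, q*(t-1)+(1-q)* s) \<in> region_D q"
      unfolding Deq using dd dx cx by auto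
  next
    assume "((1-q)*(t-1)+q* s, q*(t-1)+(1-q)* s) \<in> region_D q"
    hence H: "- (x^2)/(4*q) - q < y" "y < -q" unfolding Deq by auto
    have an: "a < 0" using ax x0 H q by linarith
    have "-b < 0" using bx x0 H by linarith
    hence v0: "0 < -b/(2*a)" using an by (intro divide_neg_neg) auto
    have "-b > 2*a" using bx ax q x0 by linarith
    moreover have "2*a < 0" using an by simp
    ultimately have v1: "-b/(2*a) < 1" using divide_less_eq_1_neg[of "2*a" "-b"] by blast
    show "a<0 \<and> c<0 \<and> b^2-4*a*c>0 \<and> 0 < -b/(2*a) \<and> -b/(2*a) < 1"
      using an v0 v1 dx dd H cx by auto
  qed
qed

definition Lq :: "real \<Rightarrow> real\<times>real \<Rightarrow> real\<times>real" where
  "Lq q p = ((1-q)*fst p + q* snd p, q*fst p + (1-q)* snd p)"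

lemma linear_Lq: "linear (Lq q)"
  unfolding Lq_def by (intro linearI) (auto simp: algebra_simps)

lemma inj_Lq: assumes "q < 1/2" shows "inj (Lq q)"
proof (rule injI)
  fix p p' assume "Lq q p = Lq q p'"
  hence e1: "(1-q)*(fst p - fst p') + q*(snd p - snd p') = 0"
    and e2: "q*(fst p - fst p') + (1-q)*(snd p - snd p') = 0" by (auto simp: Lq_def algebra_simps)
  have "(1-2*q)*((fst p - fst p') - (snd p - snd p')) = 0" using e1 e2 by (simp add: algebra_simps)
  hence "fst p - fst p' = snd p - snd p'" using assms by simp
  moreover have "(fst p - fst p') + (snd p - snd p') = 0" using e1 e2 by (simp add: algebra_simps)
  ultimately show "p = p'" by (simp add: prod_eq_iff)
qed

lemma D1_eq: assumes "q < 1/2" shows "region_D1 q = Lq q ` ({-1<..<0} \<times> {-1<..<0})"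
proof -
  have sq: "{-1,0::real} \<times> {-1,0::real} = {(-1,-1),(-1,0),(0,0),(0,-1)}" by auto
  have "{(-1, -1), (-(1 - q), -q), (0, 0), (-q, -(1 - q))} = Lq q ` ({-1,0} \<times> {-1,0})"
    unfolding sq by (simp add: Lq_def)
  hence "region_D1 q = interior (convex hull (Lq q ` ({-1,0} \<times> {-1,0})))"
    unfolding region_D1_def by simp
  also have "\<dots> = interior (Lq q ` (convex hull ({-1,0} \<times> {-1,0})))"
    by (simp add: convex_hull_linear_image linear_Lq)
  also have "\<dots> = Lq q ` interior (convex hull ({-1,0} \<times> {-1,0}))"
    by (rule interior_injective_linear_image[OF linear_Lq inj_Lq[OF assms]])
  also have "convex hull ({-1,0::real} \<times> {-1,0::real}) = {-1..0} \<times> {-1..0}"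
    unfolding convex_hull_Times by (simp add: convex_hull_eq_real_cbox cbox_interval)
  also have "interior ({-1..0::real} \<times> {-1..0::real}) = {-1<..<0} \<times> {-1<..<0}"
    by (simp add: interior_Times)
  finally show ?thesis .
qed


lemma change_vars:
  fixes g :: "real\<times>real \<Rightarrow> ennreal" and q::real
  assumes g: "g \<in> borel_measurable borel" and q: "0<q" "q<1/2"
  shows "(\<integral>\<^sup>+p. g p \<partial>lborel) = ennreal (1-2*q) * (\<integral>\<^sup>+p. g (Lq q (fst p - 1, snd p)) \<partial>lborel)"
proof -
  have PS: "pair_sigma_finite (lborel::real measure) lborel"
    by (simp add: pair_sigma_finite_def lborel.sigma_finite_measure_axioms)
  have gb[measurable]: "g \<in> borel_measurable (borel \<Otimes>\<^sub>M borel)" using g by (simp add: borel_prod)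
  define k where "k = q/(1-q)"
  define c where "c = (1-2*q)/(1-q)"
  define r where "r = q/c"
  have q1: "1 - q > 0" using q by simp
  have cpos: "c > 0" using q by (simp add: c_def)
  have lb: "(lborel :: (real\<times>real) measure) = lborel \<Otimes>\<^sub>M lborel" by (simp add: lborel_prod)
  have "(\<integral>\<^sup>+p. g p \<partial>lborel) = (\<integral>\<^sup>+x. \<integral>\<^sup>+y. g (x,y) \<partial>lborel \<partial>lborel)"
    unfolding lb by (rule lborel.nn_integral_fst[symmetric]) measurable
  also have "\<dots> = (\<integral>\<^sup>+x. \<integral>\<^sup>+u. g (x, k*x + 1*u) \<partial>lborel \<partial>lborel)"
  proof (rule nn_integral_cong)
    fix x :: real
    show "(\<integral>\<^sup>+y. g (x,y) \<partial>lborel) = (\<integral>\<^sup>+u. g (x, k*x + 1*u) \<partial>lborel)"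
      using nn_integral_real_affine[where f="\<lambda>y. g (x,y)" and c=1 and t="k*x"] by simp
  qed
  also have "\<dots> = (\<integral>\<^sup>+u. \<integral>\<^sup>+x. g (x, k*x + 1*u) \<partial>lborel \<partial>lborel)"
    by (rule pair_sigma_finite.Fubini'[OF PS, symmetric]) measurable
  also have "\<dots> = (\<integral>\<^sup>+u. ennreal (1-q) * \<integral>\<^sup>+t. g (r*u + (1-q)*t, k*(r*u + (1-q)*t) + 1*u) \<partial>lborel \<partial>lborel)"
  proof (rule nn_integral_cong)
    fix u :: real
    show "(\<integral>\<^sup>+x. g (x, k*x + 1*u) \<partial>lborel) = ennreal (1-q) * (\<integral>\<^sup>+t. g (r*u + (1-q)*t, k*(r*u + (1-q)*t) + 1*u) \<partial>lborel)"
      using nn_integral_real_affine[where f="\<lambda>x. g (x, k*x + 1*u)" and c="1-q" and t="r*u"] q1 by simp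
  qed
  also have "\<dots> = ennreal (1-q) * (\<integral>\<^sup>+u. \<integral>\<^sup>+t. g (r*u + (1-q)*t, k*(r*u + (1-q)*t) + 1*u) \<partial>lborel \<partial>lborel)"
    by (rule nn_integral_cmult) measurable
  also have "(\<integral>\<^sup>+u. \<integral>\<^sup>+t. g (r*u + (1-q)*t, k*(r*u + (1-q)*t) + 1*u) \<partial>lborel \<partial>lborel)
      = (\<integral>\<^sup>+t. \<integral>\<^sup>+u. g (r*u + (1-q)*t, k*(r*u + (1-q)*t) + 1*u) \<partial>lborel \<partial>lborel)"
    by (rule pair_sigma_finite.Fubini'[OF PS]) measurable
  also have "\<dots> = (\<integral>\<^sup>+t. ennreal c * \<integral>\<^sup>+s. g (r*(0+c* s) + (1-q)*t, k*(r*(0+c* s) + (1-q)*t) + 1*(0+c* s)) \<partial>lborel \<partial>lborel)"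
  proof (rule nn_integral_cong)
    fix t :: real
    show "(\<integral>\<^sup>+u. g (r*u + (1-q)*t, k*(r*u + (1-q)*t) + 1*u) \<partial>lborel) = ennreal c * (\<integral>\<^sup>+s. g (r*(0+c* s) + (1-q)*t, k*(r*(0+c* s) + (1-q)*t) + 1*(0+c* s)) \<partial>lborel)"
      using nn_integral_real_affine[where f="\<lambda>u. g (r*u + (1-q)*t, k*(r*u + (1-q)*t) + 1*u)" and c=c and t=0] cpos by simp
  qed
  also have "\<dots> = ennreal c * (\<integral>\<^sup>+t. \<integral>\<^sup>+s. g (r*(0+c* s) + (1-q)*t, k*(r*(0+c* s) + (1-q)*t) + 1*(0+c* s)) \<partial>lborel \<partial>lborel)"
    by (rule nn_integral_cmult) measurable
  also have "(\<integral>\<^sup>+t. \<integral>\<^sup>+s. g (r*(0+c* s) + (1-q)*t, k*(r*(0+c* s) + (1-q)*t) + 1*(0+c* s)) \<partial>lborel \<partial>lborel)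
     = (\<integral>\<^sup>+t. \<integral>\<^sup>+s. g (r*(0+c* s) + (1-q)*(-1 + 1*t), k*(r*(0+c* s) + (1-q)*(-1 + 1*t)) + 1*(0+c* s)) \<partial>lborel \<partial>lborel)"
    using nn_integral_real_affine[where f="\<lambda>t. \<integral>\<^sup>+s. g (r*(0+c* s) + (1-q)*t, k*(r*(0+c* s) + (1-q)*t) + 1*(0+c* s)) \<partial>lborel" and c=1 and t="-1"] by simp
  also have "\<dots> = (\<integral>\<^sup>+t. \<integral>\<^sup>+s. g (Lq q (t - 1, s)) \<partial>lborel \<partial>lborel)"
  proof (intro nn_integral_cong arg_cong[where f=g])
    fix t s :: real
    have rc: "r*c = q" using cpos by (simp add: r_def)
    have kq: "k*(1-q) = q" using q1 by (simp add: k_def)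
    have cq: "c*(1-q) = 1-2*q" using q1 by (simp add: c_def)
    have e1: "r*(0+c* s) + (1-q)*(-1 + 1*t) = q* s + (1-q)*(t-1)"
    proof -
      have "r*(c* s) = (r*c)* s" by (simp only: mult.assoc)
      thus ?thesis using rc by (simp add: algebra_simps)
    qed
    have "(1-q)*(k*(q* s + (1-q)*(t-1)) + c* s - (q*(t-1) + (1-q)* s))
        = (k*(1-q))*(q* s + (1-q)*(t-1)) + (c*(1-q))* s - (1-q)*(q*(t-1) + (1-q)* s)"
      by (simp add: algebra_simps)
    also have "\<dots> = 0" unfolding kq cq by (simp add: algebra_simps)
    finally have "k*(q* s + (1-q)*(t-1)) + c* s - (q*(t-1) + (1-q)* s) = 0" using q1 by simp
    hence e2: "k*(q* s + (1-q)*(t-1)) + 1*(0+c* s) = q*(t-1) + (1-q)* s" by simp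
    show "(r*(0+c* s) + (1-q)*(-1 + 1*t), k*(r*(0+c* s) + (1-q)*(-1 + 1*t)) + 1*(0+c* s)) = Lq q (t - 1, s)"
      unfolding e1 e2 by (simp add: Lq_def)
  qed
  also have "\<dots> = (\<integral>\<^sup>+p. g (Lq q (fst p - 1, snd p)) \<partial>lborel)"
    unfolding lb by (subst lborel.nn_integral_fst[symmetric]) (auto simp: Lq_def, measurable)
  finally have "(\<integral>\<^sup>+p. g p \<partial>lborel) = ennreal (1-q) * (ennreal c * (\<integral>\<^sup>+p. g (Lq q (fst p - 1, snd p)) \<partial>lborel))" .
  moreover have "ennreal (1-q) * ennreal c = ennreal (1-2*q)"
    using q1 cpos by (simp add: ennreal_mult[symmetric] c_def)
  ultimately show ?thesis by (simp add: mult.assoc[symmetric])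
qed


theorem proposition2p2:
  fixes M :: "'a measure" and T S :: "'a \<Rightarrow> real" and q :: real
  assumes "prob_space M"
    and "0 < q" and "q < 1 / 2"
    and "distributed M lborel T (\<lambda>x. indicator {0<..<1} x)"
    and "distributed M lborel S (\<lambda>x. indicator {-1<..<0} x)"
    and "prob_space.indep_var M borel T borel S"
  shows "measure M {\<omega> \<in> space M. card {x \<in> {0..1}. P_TS q (T \<omega>) (S \<omega>) x = 0} = 3}
           = 1 / (1 - 2 * q) * measure lborel (region_D q \<inter> region_D1 q)"
proof -
  interpret prob_space M by fact
  have q: "0 < q" "q < 1/2" using assms by auto
  have ind: "indep_var lborel T lborel S"
  proof -
    have e: "(case_bool lborel lborel :: bool \<Rightarrow> real measure) = (\<lambda>_. lborel)" by (auto simp: fun_eq_iff split: bool.split)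
    have e2: "(case_bool borel borel :: bool \<Rightarrow> real measure) = (\<lambda>_. borel)" by (auto simp: fun_eq_iff split: bool.split)
    show ?thesis using assms(6) unfolding indep_var_def indep_vars_def e e2 by simp
  qed
  have joint: "distributed M (lborel \<Otimes>\<^sub>M lborel) (\<lambda>\<omega>. (T \<omega>, S \<omega>))
      (\<lambda>(x,y). indicator {0<..<1} x * indicator {-1<..<0} y)"
    by (rule distributed_joint_indep) (use assms ind lborel.sigma_finite_measure_axioms in auto)
  define fa :: "real\<times>real \<Rightarrow> real" where "fa p = fst p + snd p - 1" for p
  define fb :: "real\<times>real \<Rightarrow> real" where "fb p = 1 - fst p - 2 * snd p + q * (snd p - 1 - fst p)" for p
  define fc :: "real\<times>real \<Rightarrow> real" where "fc p = snd p + q * (fst p - snd p)" for p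
  define A where "A = {p. fa p < 0 \<and> fc p < 0 \<and> (fb p)^2 - 4 * fa p * fc p > 0 \<and> 0 < - fb p / (2 * fa p) \<and> - fb p / (2 * fa p) < 1}"
  have "Measurable.pred (lborel \<Otimes>\<^sub>M lborel) (\<lambda>p. fa p < 0 \<and> fc p < 0 \<and> (fb p)^2 - 4 * fa p * fc p > 0 \<and> 0 < - fb p / (2 * fa p) \<and> - fb p / (2 * fa p) < 1)"
    unfolding fa_def fb_def fc_def by measurable
  hence Ameas: "A \<in> sets (lborel \<Otimes>\<^sub>M lborel)"
    unfolding pred_def A_def by (simp add: space_pair_measure)
  have cardA: "card {x\<in>{0..1}. P_TS q t s x = 0} = 3 \<longleftrightarrow> (t,s) \<in> A" for t s
  proof -
    have "P_TS q t s x = x * (fa (t,s) * x^2 + fb (t,s) * x + fc (t,s))" for x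
      by (simp add: P_TS_def fa_def fb_def fc_def algebra_simps power2_eq_square power3_eq_cube)
    hence "{x\<in>{0..1}. P_TS q t s x = 0} = {x\<in>{0..1}. x * (fa (t,s) * x^2 + fb (t,s) * x + fc (t,s)) = 0}"
      by simp
    moreover have "fa (t,s) + fb (t,s) + fc (t,s) = -q" by (simp add: fa_def fb_def fc_def algebra_simps)
    ultimately show ?thesis using card3_iff[OF q(1)] by (simp add: A_def)
  qed
  define E where "E = {\<omega> \<in> space M. card {x \<in> {0..1}. P_TS q (T \<omega>) (S \<omega>) x = 0} = 3}"
  have Eeq: "E = (\<lambda>\<omega>. (T \<omega>, S \<omega>)) -` A \<inter> space M" unfolding E_def using cardA by auto
  define DD where "DD = region_D q \<inter> region_D1 q"
  have pw: "(\<lambda>(x,y). indicator {0<..<1} x * indicator {-1<..<0} y) p * indicator A p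
      = (indicator DD (Lq q (fst p - 1, snd p)) :: ennreal)" for p
  proof (cases p)
    case (Pair t s)
    show ?thesis
    proof (cases "0 < t \<and> t < 1 \<and> -1 < s \<and> s < 0")
      case True
      have "Lq q (t - 1, s) \<in> region_D1 q" unfolding D1_eq[OF q(2)] using True by auto
      moreover have "(t,s) \<in> A \<longleftrightarrow> Lq q (t - 1, s) \<in> region_D q"
        using box_char[OF q, of t s] True by (simp add: A_def fa_def fb_def fc_def Lq_def)
      ultimately show ?thesis using True Pair by (auto simp: DD_def indicator_def)
    next
      case False
      have "Lq q (t - 1, s) \<notin> region_D1 q" unfolding D1_eq[OF q(2)]
        using False inj_image_mem_iff[OF inj_Lq[OF q(2)]] by auto
      thus ?thesis using False Pair by (auto simp: DD_def indicator_def)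
    qed
  qed
  have "emeasure M E = (\<integral>\<^sup>+p. (\<lambda>(x,y). indicator {0<..<1} x * indicator {-1<..<0} y) p * indicator A p \<partial>(lborel \<Otimes>\<^sub>M lborel))"
    unfolding Eeq by (rule distributed_emeasure[OF joint Ameas])
  also have "\<dots> = (\<integral>\<^sup>+p. indicator DD (Lq q (fst p - 1, snd p)) \<partial>lborel)"
    unfolding pw lborel_prod ..
  finally have eE: "emeasure M E = (\<integral>\<^sup>+p. indicator DD (Lq q (fst p - 1, snd p)) \<partial>lborel)" .
  have Dmeas: "region_D q \<in> sets (lborel \<Otimes>\<^sub>M lborel)"
  proof -
    have "region_D q = {p. -1 < fst p \<and> fst p < 0 \<and> - (fst p ^ 2) / (4 * q) - q < snd p \<and> snd p < - q}"
      by (auto simp: region_D_def)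
    also have "\<dots> \<in> sets (lborel \<Otimes>\<^sub>M lborel)"
    proof -
      have "Measurable.pred (lborel \<Otimes>\<^sub>M lborel) (\<lambda>p. -1 < fst p \<and> fst p < 0 \<and> - (fst p ^ 2) / (4 * q) - q < snd p \<and> snd p < - q)"
        by measurable
      thus ?thesis unfolding pred_def by (simp add: space_pair_measure)
    qed
    finally show ?thesis .
  qed
  have DDmeas: "DD \<in> sets borel"
  proof -
    have "region_D1 q \<in> sets borel" unfolding region_D1_def by (rule borel_open) simp
    moreover have "region_D q \<in> sets borel" using Dmeas by (simp only: lborel_prod sets_lborel)
    ultimately show ?thesis by (simp add: DD_def)
  qed
  have "emeasure lborel DD = (\<integral>\<^sup>+p. indicator DD p \<partial>lborel)"
    using DDmeas by simp
  also have "\<dots> = ennreal (1-2*q) * (\<integral>\<^sup>+p. indicator DD (Lq q (fst p - 1, snd p)) \<partial>lborel)"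
    by (rule change_vars[OF _ q]) (use DDmeas in simp)
  finally have "emeasure lborel DD = ennreal (1-2*q) * emeasure M E" using eE by simp
  hence "measure lborel DD = (1-2*q) * measure M E"
    using q by (simp add: measure_def enn2real_mult)
  thus ?thesis using q unfolding E_def[symmetric] DD_def[symmetric] by simp
qed
end
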